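(* Let $s\ge2$, $1\le t\le k-1$, $N$ a positive multiple of $s^t$, $\lambda=N/s^t$, and $p_{\max}$ a positive integer with $p_{\max}\le\lambda$. Then the formulation symmetry group $G(k,s,t)$ of ILP (OA) equals the group $G^{\rm iso}(k,s)\cong S_s\wr S_k$, and $G(k,s,t)$ is contained in the symmetry group $G(k,s,t)^{\rm LP}$ of the LP relaxation of ILP (OA); hence $|G(k,s,t)^{\rm LP}|\ge k!(s!)^k$.
   Context: Variables $x_{\mathbf{i}}$ are indexed by $\mathbf{i}=(i_1,\dots,i_k)\in\{0,\dots,s-1\}^k$ ($x_{\mathbf i}$ is the number of times the symbol combination $\mathbf i$ occurs as a row of an $N\times k$ array). ILP (OA) is: minimize $\sum_{\mathbf i}x_{\mathbf i}$ subject to, for every $t$-subset $J\subseteq\{1,\dots,k\}$ and every $a\in\{0,\dots,s-1\}^J$, $\sum_{\mathbf i:\ i_j=a_j\ \forall j\in J}x_{\mathbf i}=\lambda$; $0\le x_{\mathbf i}\le p_{\max}$; $x_{\mathbf i}\in\mathbb{Z}$. Its LP relaxation drops integrality; with feasible set $\mathcal F$, $G(k,s,t)^{\rm LP}$ is the set of permutations $\pi$ of the index set such that $\pi(x)\in\mathcal F$ and the objective value is preserved for all $x\in\mathcal F$, where $\pi(x)_{\mathbf i}=x_{\pi^{-1}(\mathbf i)}$. For an LP/ILP written as min $c^{\top}x$ s.t. $Ax=b$, $Bx\le d$, the formulation symmetry group is the set of variable permutations $\pi$ with $\pi(c)=c$ for which there exist row permutations $\sigma,\tau$ of $A$ and $B$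 such that permuting the columns of $A,B$ by $\pi$ and rows by $\sigma,\tau$ returns $A,B$, with $b,d$ preserved by $\sigma,\tau$. $G^{\rm iso}(k,s)$ is the group of permutations of $\{0,\dots,s-1\}^k$ generated by permuting coordinates and permuting the symbols $\{0,\dots,s-1\}$ independently within each coordinate (isomorphism operations); it has order $k!(s!)^k$. *)

theory Defs
  imports Complex_Main "HOL-Library.FuncSet" "HOL-Combinatorics.Permutations"
begin

text \<open>Index set: rows of an N x k array over symbols 0..s-1, i.e. lists of length k
  with entries < s.  Coordinates are 0,...,k-1.\<close>
definition idx :: "nat \<Rightarrow> nat \<Rightarrow> nat list set" where
  "idx k s = {xs. length xs = k \<and> set xs \<subseteq> {..<s}}"

text \<open>Generic formulation symmetry group of  min c^T x  s.t.  A x = b,  B x \<le> d,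
  with variables indexed by I, rows of A indexed by RA, rows of B indexed by RB.\<close>
definition formulation_sym ::
  "'i set \<Rightarrow> ('i \<Rightarrow> real) \<Rightarrow> 'r set \<Rightarrow> ('r \<Rightarrow> 'i \<Rightarrow> real) \<Rightarrow> ('r \<Rightarrow> real)
   \<Rightarrow> 'q set \<Rightarrow> ('q \<Rightarrow> 'i \<Rightarrow> real) \<Rightarrow> ('q \<Rightarrow> real) \<Rightarrow> ('i \<Rightarrow> 'i) set" where
  "formulation_sym I c RA A b RB B d =
     {\<pi>. \<pi> permutes I \<and> (\<forall>i\<in>I. c (\<pi> i) = c i)
        \<and> (\<exists>\<sigma>. \<sigma> permutes RA \<and> (\<forall>r\<in>RA. b (\<sigma> r) = b r \<and> (\<forall>i\<in>I. A (\<sigma> r) (\<pi> i) = A r i)))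
        \<and> (\<exists>\<tau>. \<tau> permutes RB \<and> (\<forall>r\<in>RB. d (\<tau> r) = d r \<and> (\<forall>i\<in>I. B (\<tau> r) (\<pi> i) = B r i)))}"

definition oa_c :: "nat list \<Rightarrow> real" where "oa_c i = 1"

definition oa_rowsA :: "nat \<Rightarrow> nat \<Rightarrow> nat \<Rightarrow> (nat set \<times> (nat \<Rightarrow> nat)) set" where
  "oa_rowsA k s t = {(J, a). J \<subseteq> {..<k} \<and> card J = t \<and> a \<in> (J \<rightarrow>\<^sub>E {..<s})}"

definition oa_A :: "nat set \<times> (nat \<Rightarrow> nat) \<Rightarrow> nat list \<Rightarrow> real" where
  "oa_A r i = (if \<forall>j\<in>fst r. i ! j = snd r j then 1 else 0)"

definition oa_b :: "nat \<Rightarrow> nat set \<times> (nat \<Rightarrow> nat) \<Rightarrow> real" where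
  "oa_b lam r = real lam"

text \<open>Inequality rows: (i, True) is x_i \<le> pmax, (i, False) is -x_i \<le> 0.\<close>
definition oa_rowsB :: "nat \<Rightarrow> nat \<Rightarrow> (nat list \<times> bool) set" where
  "oa_rowsB k s = idx k s \<times> UNIV"

definition oa_B :: "nat list \<times> bool \<Rightarrow> nat list \<Rightarrow> real" where
  "oa_B r i = (if i = fst r then (if snd r then 1 else -1) else 0)"

definition oa_d :: "nat \<Rightarrow> nat list \<times> bool \<Rightarrow> real" where
  "oa_d pmax r = (if snd r then real pmax else 0)"

definition G_form :: "nat \<Rightarrow> nat \<Rightarrow> nat \<Rightarrow> nat \<Rightarrow> nat \<Rightarrow> (nat list \<Rightarrow> nat list) set" where
  "G_form k s t lam pmax =
     formulation_sym (idx k s) oa_c (oa_rowsA k s t) oa_A (oa_b lam) (oa_rowsB k s) oa_B (oa_d pmax)"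

definition oa_LP_feasible :: "nat \<Rightarrow> nat \<Rightarrow> nat \<Rightarrow> nat \<Rightarrow> nat \<Rightarrow> (nat list \<Rightarrow> real) set" where
  "oa_LP_feasible k s t lam pmax =
     {x. (\<forall>i. i \<notin> idx k s \<longrightarrow> x i = 0)
       \<and> (\<forall>J a. J \<subseteq> {..<k} \<and> card J = t \<and> a \<in> (J \<rightarrow>\<^sub>E {..<s}) \<longrightarrow>
              (\<Sum>i\<in>{i\<in>idx k s. \<forall>j\<in>J. i ! j = a j}. x i) = real lam)
       \<and> (\<forall>i\<in>idx k s. 0 \<le> x i \<and> x i \<le> real pmax)}"

definition perm_vars :: "(nat list \<Rightarrow> nat list) \<Rightarrow> (nat list \<Rightarrow> real) \<Rightarrow> nat list \<Rightarrow> real" where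
  "perm_vars \<pi> x = (\<lambda>i. x (inv \<pi> i))"

definition G_LP :: "nat \<Rightarrow> nat \<Rightarrow> nat \<Rightarrow> nat \<Rightarrow> nat \<Rightarrow> (nat list \<Rightarrow> nat list) set" where
  "G_LP k s t lam pmax =
     {\<pi>. \<pi> permutes idx k s \<and>
        (\<forall>x\<in>oa_LP_feasible k s t lam pmax.
            perm_vars \<pi> x \<in> oa_LP_feasible k s t lam pmax \<and>
            (\<Sum>i\<in>idx k s. perm_vars \<pi> x i) = (\<Sum>i\<in>idx k s. x i))}"

definition coord_perm :: "nat \<Rightarrow> nat \<Rightarrow> (nat \<Rightarrow> nat) \<Rightarrow> nat list \<Rightarrow> nat list" where
  "coord_perm k s \<sigma> xs = (if xs \<in> idx k s then map (\<lambda>j. xs ! \<sigma> j) [0..<k] else xs)"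

definition sym_perm :: "nat \<Rightarrow> nat \<Rightarrow> nat \<Rightarrow> (nat \<Rightarrow> nat) \<Rightarrow> nat list \<Rightarrow> nat list" where
  "sym_perm k s j \<rho> xs = (if xs \<in> idx k s then xs[j := \<rho> (xs ! j)] else xs)"

definition iso_gens :: "nat \<Rightarrow> nat \<Rightarrow> (nat list \<Rightarrow> nat list) set" where
  "iso_gens k s = {coord_perm k s \<sigma> | \<sigma>. \<sigma> permutes {..<k}}
                \<union> {sym_perm k s j \<rho> | j \<rho>. j < k \<and> \<rho> permutes {..<s}}"

text \<open>Group generated (finite setting: closure of identity under composition with generators).\<close>
inductive_set G_iso :: "nat \<Rightarrow> nat \<Rightarrow> (nat list \<Rightarrow> nat list) set" for k s where
  iso_id: "id \<in> G_iso k s"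
| iso_step: "\<pi> \<in> G_iso k s \<Longrightarrow> g \<in> iso_gens k s \<Longrightarrow> g \<circ> \<pi> \<in> G_iso k s"

end

theory Submission
  imports Defs "HOL-Combinatorics.Cycles"
begin

lemma finite_idx: "finite (idx k s)"
  unfolding idx_def using finite_lists_length_eq[of "{..<s}" k] by (simp add: conj_commute)

lemma idx_iff: "xs \<in> idx k s \<longleftrightarrow> length xs = k \<and> (\<forall>j<k. xs!j < s)"
  unfolding idx_def by (auto simp: in_set_conv_nth subset_iff)

lemma perm_of_inj:
  assumes "finite S" "g ` S \<subseteq> S" "inj_on g S" "\<And>x. x \<notin> S \<Longrightarrow> g x = x"
  shows "g permutes S"
proof (rule bij_imp_permutes)
  have "g ` S = S" using assms by (intro endo_inj_surj)
  then show "bij_betw g S S" using assms by (simp add: bij_betw_def)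
qed (use assms in auto)

lemma coord_perm_idx:
  assumes "\<sigma> permutes {..<k}" "xs \<in> idx k s"
  shows "coord_perm k s \<sigma> xs \<in> idx k s" "\<And>j. j < k \<Longrightarrow> coord_perm k s \<sigma> xs ! j = xs ! \<sigma> j"
proof -
  have "\<sigma> j < k" if "j < k" for j using permutes_in_image[OF assms(1), of j] that by simp
  then show "coord_perm k s \<sigma> xs \<in> idx k s" "\<And>j. j < k \<Longrightarrow> coord_perm k s \<sigma> xs ! j = xs ! \<sigma> j"
    using assms(2) by (auto simp: coord_perm_def idx_iff)
qed

lemma coord_perm_permutes:
  assumes "\<sigma> permutes {..<k}"
  shows "coord_perm k s \<sigma> permutes idx k s"
proof (rule perm_of_inj[OF finite_idx])
  show "coord_perm k s \<sigma> ` idx k s \<subseteq> idx k s" using coord_perm_idx[OF assms] by auto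
  show "inj_on (coord_perm k s \<sigma>) (idx k s)"
  proof (rule inj_onI)
    fix xs ys assume xs: "xs \<in> idx k s" and ys: "ys \<in> idx k s"
      and eq: "coord_perm k s \<sigma> xs = coord_perm k s \<sigma> ys"
    show "xs = ys"
    proof (rule nth_equalityI)
      show "length xs = length ys" using xs ys by (simp add: idx_iff)
      fix m assume "m < length xs"
      then have m: "m < k" using xs by (simp add: idx_iff)
      have im: "inv \<sigma> m < k" using assms m by (metis lessThan_iff permutes_in_image permutes_inv)
      have "coord_perm k s \<sigma> xs ! inv \<sigma> m = coord_perm k s \<sigma> ys ! inv \<sigma> m" using eq by simp
      then show "xs ! m = ys ! m"
        using coord_perm_idx(2)[OF assms xs im] coord_perm_idx(2)[OF assms ys im]
        by (simp add: permutes_inverses(1)[OF assms])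
    qed
  qed
  show "\<And>x. x \<notin> idx k s \<Longrightarrow> coord_perm k s \<sigma> x = x" by (simp add: coord_perm_def)
qed

lemma sym_perm_idx:
  assumes "j < k" "\<rho> permutes {..<s}" "xs \<in> idx k s"
  shows "sym_perm k s j \<rho> xs \<in> idx k s"
    "\<And>m. sym_perm k s j \<rho> xs ! m = (if m = j then \<rho> (xs ! j) else xs ! m)"
proof -
  have "xs!j < s" using assms by (simp add: idx_iff)
  then have "\<rho> (xs!j) < s" using permutes_in_image[OF assms(2), of "xs!j"] by simp
  then show "sym_perm k s j \<rho> xs \<in> idx k s"
    "\<And>m. sym_perm k s j \<rho> xs ! m = (if m = j then \<rho> (xs ! j) else xs ! m)"
    using assms by (auto simp: sym_perm_def idx_iff nth_list_update)
qed

lemma sym_perm_permutes: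
  assumes "j < k" "\<rho> permutes {..<s}"
  shows "sym_perm k s j \<rho> permutes idx k s"
proof (rule perm_of_inj[OF finite_idx])
  show "sym_perm k s j \<rho> ` idx k s \<subseteq> idx k s" using sym_perm_idx[OF assms] by auto
  show "inj_on (sym_perm k s j \<rho>) (idx k s)"
  proof (rule inj_onI)
    fix xs ys assume xs: "xs \<in> idx k s" and ys: "ys \<in> idx k s"
      and eq: "sym_perm k s j \<rho> xs = sym_perm k s j \<rho> ys"
    show "xs = ys"
    proof (rule nth_equalityI)
      show "length xs = length ys" using xs ys by (simp add: idx_iff)
      fix m assume "m < length xs"
      have "sym_perm k s j \<rho> xs ! m = sym_perm k s j \<rho> ys ! m" using eq by simp
      then have "(if m = j then \<rho> (xs ! j) else xs ! m) = (if m = j then \<rho> (ys ! j) else ys ! m)"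
        using sym_perm_idx(2)[OF assms xs] sym_perm_idx(2)[OF assms ys] by simp
      then show "xs ! m = ys ! m"
        using permutes_inj[OF assms(2)] by (auto split: if_splits dest: injD)
    qed
  qed
  show "\<And>x. x \<notin> idx k s \<Longrightarrow> sym_perm k s j \<rho> x = x" by (simp add: sym_perm_def)
qed

lemma gens_permutes: "g \<in> iso_gens k s \<Longrightarrow> g permutes idx k s"
  unfolding iso_gens_def using coord_perm_permutes sym_perm_permutes by blast

lemma G_iso_permutes: "\<pi> \<in> G_iso k s \<Longrightarrow> \<pi> permutes idx k s"
proof (induction rule: G_iso.induct)
  case iso_id then show ?case by (rule permutes_id)
next
  case (iso_step \<pi> g) then show ?case by (metis permutes_compose gens_permutes)
qed

lemma G_iso_comp: "\<pi> \<in> G_iso k s \<Longrightarrow> \<pi>' \<in> G_iso k s \<Longrightarrow> \<pi> \<circ> \<pi>' \<in> G_iso k s"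
  by (induction rule: G_iso.induct) (auto simp: o_assoc[symmetric] intro: G_iso.iso_step)

lemma G_iso_gen: "g \<in> iso_gens k s \<Longrightarrow> g \<in> G_iso k s"
  using G_iso.iso_step[OF G_iso.iso_id] by simp

lemma G_iso_pow: "g \<in> G_iso k s \<Longrightarrow> g ^^ n \<in> G_iso k s"
  by (induction n) (auto intro: G_iso_comp G_iso.iso_id)

lemma G_iso_inv: assumes "\<pi> \<in> G_iso k s" shows "inv \<pi> \<in> G_iso k s"
proof -
  have "permutation \<pi>" using G_iso_permutes[OF assms] finite_idx
    by (auto simp: permutation_permutes)
  then obtain n where n: "\<pi> ^^ n = id" "n > 0" by (rule permutation_is_nilpotent)
  have "\<pi> \<circ> \<pi> ^^ (n - 1) = id" using n by (metis Suc_diff_1 funpow.simps(2))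
  moreover have "\<pi> ^^ (n - 1) \<circ> \<pi> = id" using n by (metis Suc_diff_1 funpow_Suc_right)
  ultimately have "inv \<pi> = \<pi> ^^ (n - 1)" by (rule inv_unique_comp)
  then show ?thesis using G_iso_pow[OF assms] by simp
qed

definition blk :: "nat set \<times> (nat \<Rightarrow> nat) \<Rightarrow> nat list \<Rightarrow> bool" where
  "blk r i \<longleftrightarrow> (\<forall>j\<in>fst r. i ! j = snd r j)"

lemma oa_A_blk: "oa_A r i = (if blk r i then 1 else 0)"
  by (simp add: oa_A_def blk_def)

lemma oa_A_eq_iff: "(oa_A r i = oa_A r' i') \<longleftrightarrow> (blk r i \<longleftrightarrow> blk r' i')"
  by (simp add: oa_A_blk)

lemma finite_rowsA: "finite (oa_rowsA k s t)"
proof -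
  have "oa_rowsA k s t \<subseteq> Sigma (Pow {..<k}) (\<lambda>J. J \<rightarrow>\<^sub>E {..<s})"
    by (auto simp: oa_rowsA_def)
  moreover have "finite (Sigma (Pow {..<k}) (\<lambda>J. J \<rightarrow>\<^sub>E {..<s}))"
    by (intro finite_SigmaI finite_PiE) (auto intro: finite_subset)
  ultimately show ?thesis by (rule finite_subset)
qed

lemma blk_sub:
  assumes s: "s \<ge> 2" and r1: "r1 \<in> oa_rowsA k s t" and r2: "r2 \<in> oa_rowsA k s t"
    and imp: "\<And>i. i \<in> idx k s \<Longrightarrow> blk r2 i \<Longrightarrow> blk r1 i"
  shows "fst r1 \<subseteq> fst r2 \<and> (\<forall>m\<in>fst r1. snd r1 m = snd r2 m)"
proof -
  obtain J1 a1 where e1: "r1 = (J1, a1)" by (cases r1)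
  obtain J2 a2 where e2: "r2 = (J2, a2)" by (cases r2)
  have J1: "J1 \<subseteq> {..<k}" "a1 \<in> J1 \<rightarrow>\<^sub>E {..<s}" using r1 e1 by (auto simp: oa_rowsA_def)
  have J2: "J2 \<subseteq> {..<k}" "a2 \<in> J2 \<rightarrow>\<^sub>E {..<s}" using r2 e2 by (auto simp: oa_rowsA_def)
  show ?thesis
  proof (intro conjI ballI subsetI)
    fix j assume j: "j \<in> fst r1"
    then have jJ1: "j \<in> J1" using e1 by simp
    then have jk: "j < k" using J1 by auto
    define u where "u = map (\<lambda>m. if m \<in> J2 then a2 m else if m = j then (if a1 j = 0 then 1 else 0) else 0) [0..<k]"
    have u_nth: "u ! m = (if m \<in> J2 then a2 m else if m = j then (if a1 j = 0 then 1 else 0) else 0)" if "m < k" for m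
      using that by (simp add: u_def)
    have "length u = k" by (simp add: u_def)
    then have "u \<in> idx k s"
      using s J2 by (auto simp: idx_iff u_nth PiE_iff)
    moreover have "blk r2 u" using J2 by (auto simp: blk_def e2 u_nth)
    ultimately have "blk r1 u" by (rule imp)
    then have uj: "u ! j = a1 j" using jJ1 e1 by (simp add: blk_def)
    show "j \<in> fst r2"
    proof (rule ccontr)
      assume "j \<notin> fst r2"
      then show False using uj u_nth[OF jk] e2 by (simp split: if_splits)
    qed
    then show "snd r1 j = snd r2 j" using uj u_nth[OF jk] e1 e2 by simp
  qed
qed

lemma blk_det:
  assumes s: "s \<ge> 2" and r1: "r1 \<in> oa_rowsA k s t" and r2: "r2 \<in> oa_rowsA k s t"
    and eq: "\<And>i. i \<in> idx k s \<Longrightarrow> blk r1 i \<longleftrightarrow> blk r2 i"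
  shows "r1 = r2"
proof -
  have a: "fst r1 \<subseteq> fst r2 \<and> (\<forall>m\<in>fst r1. snd r1 m = snd r2 m)"
    using blk_sub[OF s r1 r2] eq by blast
  have b: "fst r2 \<subseteq> fst r1" using blk_sub[OF s r2 r1] eq by blast
  have ext1: "snd r1 \<in> fst r1 \<rightarrow>\<^sub>E {..<s}" and ext2: "snd r2 \<in> fst r2 \<rightarrow>\<^sub>E {..<s}"
    using r1 r2 by (auto simp: oa_rowsA_def)
  have "fst r1 = fst r2" using a b by blast
  moreover have "snd r1 = snd r2"
  proof
    fix m show "snd r1 m = snd r2 m"
      using a ext1 ext2 \<open>fst r1 = fst r2\<close> by (cases "m \<in> fst r1") (auto simp: PiE_def extensional_def)
  qed
  ultimately show ?thesis by (simp add: prod_eq_iff)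
qed

lemma G_form_D:
  assumes "\<pi> \<in> G_form k s t lam pmax"
  shows "\<pi> permutes idx k s"
    "\<exists>\<sigma>. \<sigma> permutes oa_rowsA k s t \<and> (\<forall>r\<in>oa_rowsA k s t. \<forall>i\<in>idx k s. blk (\<sigma> r) (\<pi> i) \<longleftrightarrow> blk r i)"
proof -
  have "\<pi> permutes idx k s \<and> (\<exists>\<sigma>. \<sigma> permutes oa_rowsA k s t \<and> (\<forall>r\<in>oa_rowsA k s t. oa_b lam (\<sigma> r) = oa_b lam r \<and> (\<forall>i\<in>idx k s. oa_A (\<sigma> r) (\<pi> i) = oa_A r i)))"
    using assms unfolding G_form_def formulation_sym_def mem_Collect_eq by blast
  then show "\<pi> permutes idx k s"
    "\<exists>\<sigma>. \<sigma> permutes oa_rowsA k s t \<and> (\<forall>r\<in>oa_rowsA k s t. \<forall>i\<in>idx k s. blk (\<sigma> r) (\<pi> i) \<longleftrightarrow> blk r i)"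
    unfolding oa_A_eq_iff by blast+
qed

lemma G_form_I:
  assumes s: "s \<ge> 2" and p: "\<pi> permutes idx k s"
    and ex: "\<And>r. r \<in> oa_rowsA k s t \<Longrightarrow> \<exists>r'\<in>oa_rowsA k s t. \<forall>i\<in>idx k s. blk r' (\<pi> i) \<longleftrightarrow> blk r i"
  shows "\<pi> \<in> G_form k s t lam pmax"
proof -
  define R where "R = oa_rowsA k s t"
  define f where "f r = (SOME r'. r'\<in>R \<and> (\<forall>i\<in>idx k s. blk r' (\<pi> i) \<longleftrightarrow> blk r i))" for r
  have f: "f r \<in> R \<and> (\<forall>i\<in>idx k s. blk (f r) (\<pi> i) \<longleftrightarrow> blk r i)" if "r \<in> R" for r
    unfolding f_def by (rule someI_ex) (use ex that R_def in blast)
  define \<sigma> where "\<sigma> r = (if r \<in> R then f r else r)" for r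
  have inj: "inj_on \<sigma> R"
  proof (rule inj_onI)
    fix r1 r2 assume r1: "r1 \<in> R" and r2: "r2 \<in> R" and e: "\<sigma> r1 = \<sigma> r2"
    show "r1 = r2"
    proof (rule blk_det[OF s])
      show "r1 \<in> oa_rowsA k s t" "r2 \<in> oa_rowsA k s t" using r1 r2 R_def by auto
      fix i assume "i \<in> idx k s"
      then show "blk r1 i \<longleftrightarrow> blk r2 i" using f[OF r1] f[OF r2] e r1 r2 by (simp add: \<sigma>_def)
    qed
  qed
  have sp: "\<sigma> permutes R"
    by (rule perm_of_inj) (use finite_rowsA R_def inj f in \<open>auto simp: \<sigma>_def\<close>)
  have sA: "\<forall>r\<in>R. \<forall>i\<in>idx k s. oa_A (\<sigma> r) (\<pi> i) = oa_A r i"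
    using f by (simp add: \<sigma>_def oa_A_eq_iff)
  define \<tau> where "\<tau> = (\<lambda>(i::nat list, b::bool). (\<pi> i, b))"
  have tp: "\<tau> permutes oa_rowsB k s"
  proof (rule perm_of_inj)
    show "finite (oa_rowsB k s)" unfolding oa_rowsB_def using finite_idx by simp
    show "\<tau> ` oa_rowsB k s \<subseteq> oa_rowsB k s"
      using p by (force simp: \<tau>_def oa_rowsB_def permutes_in_image)
    show "inj_on \<tau> (oa_rowsB k s)"
      by (rule inj_onI) (clarsimp simp: \<tau>_def inj_eq[OF permutes_inj[OF p]])
    show "\<And>x. x \<notin> oa_rowsB k s \<Longrightarrow> \<tau> x = x"
      using p by (force simp: \<tau>_def oa_rowsB_def permutes_not_in)
  qed
  have tB: "\<forall>r\<in>oa_rowsB k s. oa_d pmax (\<tau> r) = oa_d pmax r \<and> (\<forall>i\<in>idx k s. oa_B (\<tau> r) (\<pi> i) = oa_B r i)"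
  proof (intro ballI conjI)
    fix r i assume "r \<in> oa_rowsB k s"
    obtain i0 b where r: "r = (i0, b)" by (cases r)
    show "oa_d pmax (\<tau> r) = oa_d pmax r" by (simp add: r \<tau>_def oa_d_def)
    show "oa_B (\<tau> r) (\<pi> i) = oa_B r i"
      by (simp add: r \<tau>_def oa_B_def inj_eq[OF permutes_inj[OF p]])
  qed
  show ?thesis unfolding G_form_def formulation_sym_def
  proof (intro CollectI conjI)
    show "\<pi> permutes idx k s" by (rule p)
    show "\<forall>i\<in>idx k s. oa_c (\<pi> i) = oa_c i" by (simp add: oa_c_def)
    show "\<exists>\<sigma>. \<sigma> permutes oa_rowsA k s t \<and> (\<forall>r\<in>oa_rowsA k s t. oa_b lam (\<sigma> r) = oa_b lam r \<and> (\<forall>i\<in>idx k s. oa_A (\<sigma> r) (\<pi> i) = oa_A r i))"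
      using sp sA unfolding R_def by (intro exI[of _ \<sigma>]) (simp add: oa_b_def)
    show "\<exists>\<tau>. \<tau> permutes oa_rowsB k s \<and> (\<forall>r\<in>oa_rowsB k s. oa_d pmax (\<tau> r) = oa_d pmax r \<and> (\<forall>i\<in>idx k s. oa_B (\<tau> r) (\<pi> i) = oa_B r i))"
      using tp tB by blast
  qed
qed

lemma coord_perm_row:
  assumes sp: "\<sigma> permutes {..<k}" and r: "r \<in> oa_rowsA k s t"
  shows "\<exists>r'\<in>oa_rowsA k s t. \<forall>i\<in>idx k s. blk r' (coord_perm k s \<sigma> i) \<longleftrightarrow> blk r i"
proof -
  obtain J a where ra: "r = (J, a)" by (cases r)
  have J: "J \<subseteq> {..<k}" "card J = t" "a \<in> J \<rightarrow>\<^sub>E {..<s}" using r ra by (auto simp: oa_rowsA_def)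
  have ip: "inv \<sigma> permutes {..<k}" using sp by (rule permutes_inv)
  define J' where "J' = inv \<sigma> ` J"
  define a' where "a' = restrict (\<lambda>j. a (\<sigma> j)) J'"
  have memJ': "j \<in> J' \<longleftrightarrow> \<sigma> j \<in> J" for j
  proof
    assume "j \<in> J'"
    then obtain m where "m \<in> J" "j = inv \<sigma> m" by (auto simp: J'_def)
    then show "\<sigma> j \<in> J" by (simp add: permutes_inverses(1)[OF sp])
  next
    assume "\<sigma> j \<in> J"
    then have "inv \<sigma> (\<sigma> j) \<in> J'" by (simp add: J'_def)
    then show "j \<in> J'" by (simp add: permutes_inverses(2)[OF sp])
  qed
  have "inv \<sigma> x < k" if "x < k" for x using permutes_in_image[OF ip, of x] that by simp
  then have "J' \<subseteq> {..<k}" using J(1) unfolding J'_def by auto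
  moreover have "card J' = t"
    unfolding J'_def using J(2) card_image[OF permutes_inj_on[OF ip]] by simp
  moreover have "a' \<in> J' \<rightarrow>\<^sub>E {..<s}" using J(3) memJ' by (auto simp: a'_def)
  ultimately have r': "(J', a') \<in> oa_rowsA k s t" by (simp add: oa_rowsA_def)
  have "blk (J', a') (coord_perm k s \<sigma> i) \<longleftrightarrow> blk r i" if i: "i \<in> idx k s" for i
  proof -
    have "blk (J', a') (coord_perm k s \<sigma> i) \<longleftrightarrow> (\<forall>j\<in>J'. i ! \<sigma> j = a (\<sigma> j))"
      using coord_perm_idx(2)[OF sp i] \<open>J' \<subseteq> {..<k}\<close> unfolding blk_def a'_def
      by (metis (no_types, lifting) fst_conv lessThan_iff restrict_apply' snd_conv subsetD)
    also have "\<dots> \<longleftrightarrow> (\<forall>m\<in>J. i ! m = a m)"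
      using memJ' sp by (metis permutes_inverses(1))
    finally show ?thesis by (simp add: blk_def ra)
  qed
  then show ?thesis using r' by blast
qed

lemma sym_perm_row:
  assumes j: "j < k" and rp: "\<rho> permutes {..<s}" and r: "r \<in> oa_rowsA k s t"
  shows "\<exists>r'\<in>oa_rowsA k s t. \<forall>i\<in>idx k s. blk r' (sym_perm k s j \<rho> i) \<longleftrightarrow> blk r i"
proof -
  obtain J a where ra: "r = (J, a)" by (cases r)
  have J: "J \<subseteq> {..<k}" "card J = t" "a \<in> J \<rightarrow>\<^sub>E {..<s}" using r ra by (auto simp: oa_rowsA_def)
  show ?thesis
  proof (cases "j \<in> J")
    case False
    have "blk r (sym_perm k s j \<rho> i) \<longleftrightarrow> blk r i" if i: "i \<in> idx k s" for i
      using sym_perm_idx(2)[OF j rp i] False by (auto simp: blk_def ra)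
    then show ?thesis using r by blast
  next
    case True
    define a' where "a' = a(j := \<rho> (a j))"
    have "a j < s" using J(3) True by auto
    then have "\<rho> (a j) < s" using permutes_in_image[OF rp, of "a j"] by simp
    then have "a' \<in> J \<rightarrow>\<^sub>E {..<s}" using J(3) True by (auto simp: a'_def PiE_iff extensional_def)
    then have r': "(J, a') \<in> oa_rowsA k s t" using J by (simp add: oa_rowsA_def)
    have "blk (J, a') (sym_perm k s j \<rho> i) \<longleftrightarrow> blk r i" if i: "i \<in> idx k s" for i
    proof -
      have "\<rho> (i ! j) = \<rho> (a j) \<longleftrightarrow> i ! j = a j"
        using permutes_inj[OF rp] by (auto dest: injD)
      then show ?thesis
        using sym_perm_idx(2)[OF j rp i] True by (auto simp: blk_def ra a'_def)
    qed
    then show ?thesis using r' by blast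
  qed
qed

lemma gen_row:
  assumes "g \<in> iso_gens k s" and "r \<in> oa_rowsA k s t"
  shows "\<exists>r'\<in>oa_rowsA k s t. \<forall>i\<in>idx k s. blk r' (g i) \<longleftrightarrow> blk r i"
  using assms coord_perm_row sym_perm_row unfolding iso_gens_def by blast

lemma G_iso_sub_form:
  assumes s: "s \<ge> 2" and "\<pi> \<in> G_iso k s"
  shows "\<pi> \<in> G_form k s t lam pmax"
  using assms(2)
proof (induction rule: G_iso.induct)
  case iso_id
  show ?case by (rule G_form_I[OF s permutes_id]) auto
next
  case (iso_step \<pi> g)
  obtain \<sigma> where sg: "\<sigma> permutes oa_rowsA k s t"
    "\<forall>r\<in>oa_rowsA k s t. \<forall>i\<in>idx k s. blk (\<sigma> r) (\<pi> i) \<longleftrightarrow> blk r i"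
    using G_form_D(2)[OF iso_step.IH] by blast
  have pp: "\<pi> permutes idx k s" using G_form_D(1)[OF iso_step.IH] .
  show ?case
  proof (rule G_form_I[OF s])
    show "g \<circ> \<pi> permutes idx k s" using pp gens_permutes[OF iso_step.hyps(2)] by (rule permutes_compose)
    fix r assume r: "r \<in> oa_rowsA k s t"
    have r1: "\<sigma> r \<in> oa_rowsA k s t" using sg(1) r by (simp add: permutes_in_image)
    obtain r2 where r2: "r2 \<in> oa_rowsA k s t" "\<forall>i\<in>idx k s. blk r2 (g i) \<longleftrightarrow> blk (\<sigma> r) i"
      using gen_row[OF iso_step.hyps(2) r1] by blast
    have "\<forall>i\<in>idx k s. blk r2 ((g \<circ> \<pi>) i) \<longleftrightarrow> blk r i"
      using r2(2) sg(2) r pp by (simp add: permutes_in_image)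
    then show "\<exists>r'\<in>oa_rowsA k s t. \<forall>i\<in>idx k s. blk r' ((g \<circ> \<pi>) i) \<longleftrightarrow> blk r i" using r2(1) by blast
  qed
qed

definition adj :: "nat \<Rightarrow> nat list \<Rightarrow> nat list \<Rightarrow> bool" where
  "adj k p q \<longleftrightarrow> (\<exists>j<k. \<forall>m<k. m \<noteq> j \<longrightarrow> p ! m = q ! m)"

definition Icl :: "nat \<Rightarrow> nat \<Rightarrow> nat \<Rightarrow> nat list \<Rightarrow> nat list \<Rightarrow> nat list set" where
  "Icl k s t p q = {u \<in> idx k s. \<forall>r\<in>oa_rowsA k s t. blk r p \<and> blk r q \<longrightarrow> blk r u}"

lemma adj_Icl:
  assumes s: "s \<ge> 2" and t: "1 \<le> t" "t \<le> k - 1"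
    and p: "p \<in> idx k s" and q: "q \<in> idx k s" and a: "adj k p q"
  shows "card (Icl k s t p q) \<le> s"
proof -
  obtain j where j: "j < k" "\<And>m. m < k \<Longrightarrow> m \<noteq> j \<Longrightarrow> p ! m = q ! m" using a by (auto simp: adj_def)
  have sub: "Icl k s t p q \<subseteq> (\<lambda>a. p[j := a]) ` {..<s}"
  proof
    fix u assume u: "u \<in> Icl k s t p q"
    then have ui: "u \<in> idx k s" by (simp add: Icl_def)
    have agree: "u ! m = p ! m" if m: "m < k" "m \<noteq> j" for m
    proof -
      have "card ({..<k} - {j, m}) = k - 2" using j m by (simp add: card_Diff_subset)
      then have "t - 1 \<le> card ({..<k} - {j, m})" using t by simp
      then obtain T where T: "T \<subseteq> {..<k} - {j, m}" "card T = t - 1" "finite T"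
        by (rule obtain_subset_with_card_n)
      define J where "J = insert m T"
      have "m \<notin> T" using T by auto
      then have cJ: "card J = t" using T t by (simp add: J_def)
      have Jk: "J \<subseteq> {..<k}" using T m by (auto simp: J_def)
      have jJ: "j \<notin> J" using T m by (auto simp: J_def)
      define a where "a = restrict (\<lambda>x. p ! x) J"
      have "a \<in> J \<rightarrow>\<^sub>E {..<s}" using p Jk by (auto simp: a_def idx_iff)
      then have r: "(J, a) \<in> oa_rowsA k s t" using cJ Jk by (simp add: oa_rowsA_def)
      have "blk (J, a) p" by (simp add: blk_def a_def)
      moreover have "blk (J, a) q" using j(2) Jk jJ by (force simp: blk_def a_def)
      ultimately have "blk (J, a) u" using u r by (auto simp: Icl_def)
      then show ?thesis by (simp add: blk_def a_def J_def)
    qed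
    have "u = p[j := u ! j]"
      by (rule nth_equalityI) (use ui p agree j(1) in \<open>auto simp: idx_iff nth_list_update\<close>)
    moreover have "u ! j < s" using ui j by (simp add: idx_iff)
    ultimately show "u \<in> (\<lambda>a. p[j := a]) ` {..<s}" by blast
  qed
  have "card (Icl k s t p q) \<le> card ((\<lambda>a. p[j := a]) ` {..<s})"
    by (rule card_mono[OF _ sub]) simp
  also have "\<dots> \<le> s" using card_image_le[of "{..<s}" "\<lambda>a. p[j := a]"] by simp
  finally show ?thesis .
qed

lemma nadj_Icl:
  assumes s: "s \<ge> 2" and k: "k \<ge> 1"
    and p: "p \<in> idx k s" and q: "q \<in> idx k s" and a: "\<not> adj k p q"
  shows "card (Icl k s t p q) > s"
proof -
  obtain j1 where j1: "j1 < k" "j1 \<noteq> 0" "p ! j1 \<noteq> q ! j1" using a k by (auto simp: adj_def)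
  obtain j2 where j2: "j2 < k" "j2 \<noteq> j1" "p ! j2 \<noteq> q ! j2" using a j1 by (auto simp: adj_def)
  define h where "h = (\<lambda>(a::nat, b::nat). p[j1 := a, j2 := b])"
  have hn: "h (a, b) ! m = (if m = j2 then b else if m = j1 then a else p ! m)" if "m < k" for a b m
    using that p j1 j2 by (simp add: h_def nth_list_update idx_iff)
  have img: "h ` ({..<s} \<times> {..<s}) \<subseteq> Icl k s t p q"
  proof (clarsimp)
    fix a b assume ab: "a < s" "b < s"
    have "h (a, b) \<in> idx k s" using p ab by (auto simp: idx_iff hn) (simp add: h_def)
    moreover have "blk r (h (a, b))" if r: "r \<in> oa_rowsA k s t" "blk r p" "blk r q" for r
    proof -
      have "fst r \<subseteq> {..<k}" using r by (auto simp: oa_rowsA_def)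
      show ?thesis unfolding blk_def
      proof
        fix j assume jr: "j \<in> fst r"
        then have "j < k" using \<open>fst r \<subseteq> {..<k}\<close> by auto
        moreover have "j \<noteq> j1" "j \<noteq> j2" using r jr j1 j2 by (auto simp: blk_def)
        ultimately show "h (a, b) ! j = snd r j" using r(2) jr by (simp add: hn blk_def)
      qed
    qed
    ultimately show "h (a, b) \<in> Icl k s t p q" by (simp add: Icl_def)
  qed
  have inj: "inj_on h ({..<s} \<times> {..<s})"
  proof (rule inj_onI, clarify)
    fix a b a' b' assume "h (a, b) = h (a', b')"
    then have "h (a, b) ! j1 = h (a', b') ! j1" "h (a, b) ! j2 = h (a', b') ! j2" by simp_all
    then show "a = a' \<and> b = b'" using hn j1 j2 by simp
  qed
  have fin: "finite (Icl k s t p q)" using finite_idx by (rule finite_subset[rotated]) (auto simp: Icl_def)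
  have "s * s \<le> card (Icl k s t p q)"
    using card_mono[OF fin img] card_image[OF inj] by simp
  moreover have "s < s * s" using s by simp
  ultimately show ?thesis by linarith
qed

lemma adj_iff_Icl:
  assumes s: "s \<ge> 2" and t: "1 \<le> t" "t \<le> k - 1"
    and p: "p \<in> idx k s" and q: "q \<in> idx k s"
  shows "adj k p q \<longleftrightarrow> card (Icl k s t p q) \<le> s"
  using adj_Icl[OF s t p q] nadj_Icl[OF s _ p q, of t] t by fastforce

lemma G_form_Icl:
  assumes f: "\<pi> \<in> G_form k s t lam pmax" and p: "p \<in> idx k s" and q: "q \<in> idx k s"
  shows "\<pi> ` Icl k s t p q = Icl k s t (\<pi> p) (\<pi> q)"
proof -
  have pp: "\<pi> permutes idx k s" using G_form_D(1)[OF f] .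
  obtain \<sigma> where sg: "\<sigma> permutes oa_rowsA k s t"
    "\<forall>r\<in>oa_rowsA k s t. \<forall>i\<in>idx k s. blk (\<sigma> r) (\<pi> i) \<longleftrightarrow> blk r i"
    using G_form_D(2)[OF f] by blast
  have R: "\<sigma> ` oa_rowsA k s t = oa_rowsA k s t" using permutes_image[OF sg(1)] .
  have key: "\<pi> u \<in> Icl k s t (\<pi> p) (\<pi> q) \<longleftrightarrow> u \<in> Icl k s t p q" if u: "u \<in> idx k s" for u
  proof -
    have "\<pi> u \<in> Icl k s t (\<pi> p) (\<pi> q) \<longleftrightarrow>
        (\<forall>r'\<in>\<sigma> ` oa_rowsA k s t. blk r' (\<pi> p) \<and> blk r' (\<pi> q) \<longrightarrow> blk r' (\<pi> u))"
      unfolding R Icl_def using u by (simp add: permutes_in_image[OF pp])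
    also have "\<dots> \<longleftrightarrow> (\<forall>r\<in>oa_rowsA k s t. blk (\<sigma> r) (\<pi> p) \<and> blk (\<sigma> r) (\<pi> q) \<longrightarrow> blk (\<sigma> r) (\<pi> u))"
      by (simp only: ball_simps)
    also have "\<dots> \<longleftrightarrow> (\<forall>r\<in>oa_rowsA k s t. blk r p \<and> blk r q \<longrightarrow> blk r u)"
      using sg(2) p q u by (meson)
    also have "\<dots> \<longleftrightarrow> u \<in> Icl k s t p q" using u by (simp add: Icl_def)
    finally show ?thesis .
  qed
  show ?thesis
  proof
    show "\<pi> ` Icl k s t p q \<subseteq> Icl k s t (\<pi> p) (\<pi> q)" using key by (auto simp: Icl_def)
    show "Icl k s t (\<pi> p) (\<pi> q) \<subseteq> \<pi> ` Icl k s t p q"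
    proof
      fix v assume v: "v \<in> Icl k s t (\<pi> p) (\<pi> q)"
      then have "v \<in> idx k s" by (simp add: Icl_def)
      then have "inv \<pi> v \<in> idx k s" "\<pi> (inv \<pi> v) = v"
        using pp by (simp_all add: permutes_in_image[OF permutes_inv[OF pp]] permutes_inverses)
      then show "v \<in> \<pi> ` Icl k s t p q" using key v by (metis image_eqI)
    qed
  qed
qed

lemma G_form_adj:
  assumes s: "s \<ge> 2" and t: "1 \<le> t" "t \<le> k - 1"
    and f: "\<pi> \<in> G_form k s t lam pmax" and p: "p \<in> idx k s" and q: "q \<in> idx k s"
  shows "adj k (\<pi> p) (\<pi> q) \<longleftrightarrow> adj k p q"
proof -
  have pp: "\<pi> permutes idx k s" using G_form_D(1)[OF f] .
  have "card (Icl k s t (\<pi> p) (\<pi> q)) = card (Icl k s t p q)"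
    using G_form_Icl[OF f p q] card_image[OF permutes_inj_on[OF pp]] by metis
  moreover have "\<pi> p \<in> idx k s" "\<pi> q \<in> idx k s" using pp p q by (simp_all add: permutes_in_image)
  ultimately show ?thesis using adj_iff_Icl[OF s t] p q by simp
qed

lemma adj_sym: "adj k p q \<Longrightarrow> adj k q p"
  unfolding adj_def by metis

lemma adj_refl: "k \<ge> 1 \<Longrightarrow> adj k p p"
  unfolding adj_def by (rule exI[of _ 0]) auto

lemma adj_upd: "j < k \<Longrightarrow> adj k (p[j := a]) (p[j := b])"
  unfolding adj_def by (auto simp: nth_list_update)

lemma adj_upd1: "j < k \<Longrightarrow> adj k (p[j := a]) p"
  using adj_upd[of j k p a "p ! j"] by simp

lemma adj_z_single:
  assumes "adj k z w" "\<And>m. m < k \<Longrightarrow> z ! m = 0" "j < k" "w ! j \<noteq> 0" "m < k" "m \<noteq> j"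
  shows "w ! m = 0"
proof -
  obtain i where i: "i < k" "\<And>m. m < k \<Longrightarrow> m \<noteq> i \<Longrightarrow> z ! m = w ! m" using assms(1) by (auto simp: adj_def)
  have "i = j" using i(2)[of j] assms by (metis)
  then show ?thesis using i(2)[of m] assms by simp
qed

lemma adj_two:
  assumes "adj k z p" "adj k w p" "\<And>m. m < k \<Longrightarrow> z ! m = 0" "j < k" "w ! j \<noteq> 0"
    "\<And>m. m < k \<Longrightarrow> m \<noteq> j \<Longrightarrow> w ! m = 0" "m < k" "m \<noteq> j"
  shows "p ! m = 0"
proof -
  obtain \<alpha> where a: "\<alpha> < k" "\<And>m. m < k \<Longrightarrow> m \<noteq> \<alpha> \<Longrightarrow> z ! m = p ! m" using assms(1) by (auto simp: adj_def)
  obtain \<beta> where b: "\<beta> < k" "\<And>m. m < k \<Longrightarrow> m \<noteq> \<beta> \<Longrightarrow> w ! m = p ! m" using assms(2) by (auto simp: adj_def)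
  show ?thesis
  proof (cases "\<alpha> = j")
    case True then show ?thesis using a(2)[of m] assms by simp
  next
    case False
    then have "p ! j = 0" using a(2)[of j] assms by simp
    then have "\<beta> = j" using b(2)[of j] assms by auto
    then show ?thesis using b(2)[of m] assms by simp
  qed
qed

lemma adj_comb:
  assumes "adj k p u" "adj k p v" "j1 < k" "j2 < k" "j1 \<noteq> j2" "u ! j1 \<noteq> v ! j1" "u ! j2 \<noteq> v ! j2"
    "\<And>m. m < k \<Longrightarrow> m \<noteq> j1 \<Longrightarrow> m \<noteq> j2 \<Longrightarrow> u ! m = v ! m"
  shows "(\<forall>m<k. p ! m = (if m = j1 then v ! j1 else u ! m)) \<or> (\<forall>m<k. p ! m = (if m = j2 then v ! j2 else u ! m))"
proof -
  obtain \<alpha> where a: "\<alpha> < k" "\<And>m. m < k \<Longrightarrow> m \<noteq> \<alpha> \<Longrightarrow> p ! m = u ! m" using assms(1) by (auto simp: adj_def)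
  obtain \<beta> where b: "\<beta> < k" "\<And>m. m < k \<Longrightarrow> m \<noteq> \<beta> \<Longrightarrow> p ! m = v ! m" using assms(2) by (auto simp: adj_def)
  have j1: "j1 = \<alpha> \<or> j1 = \<beta>" using a(2)[of j1] b(2)[of j1] assms(3,6) by metis
  have j2: "j2 = \<alpha> \<or> j2 = \<beta>" using a(2)[of j2] b(2)[of j2] assms(4,7) by metis
  show ?thesis
  proof (cases "j1 = \<alpha>")
    case True
    then have "j2 = \<beta>" using j2 assms by auto
    then have "\<forall>m<k. p ! m = (if m = j1 then v ! j1 else u ! m)"
      using a(2) b(2) True assms(5) by auto
    then show ?thesis by blast
  next
    case False
    then have "j1 = \<beta>" "j2 = \<alpha>" using j1 j2 assms(5) by auto
    then have "\<forall>m<k. p ! m = (if m = j2 then v ! j2 else u ! m)"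
      using a(2) b(2) assms(5) by auto
    then show ?thesis by blast
  qed
qed

definition zz :: "nat \<Rightarrow> nat list" where "zz k = replicate k 0"
definition ee :: "nat \<Rightarrow> nat \<Rightarrow> nat \<Rightarrow> nat list" where "ee k j a = (zz k)[j := a]"

lemma zz_idx: "s \<ge> 1 \<Longrightarrow> zz k \<in> idx k s" by (simp add: zz_def idx_iff)
lemma zz_nth: "m < k \<Longrightarrow> zz k ! m = 0" by (simp add: zz_def)
lemma ee_nth: "m < k \<Longrightarrow> ee k j a ! m = (if m = j then a else 0)"
  by (simp add: ee_def zz_def nth_list_update)
lemma ee_len: "length (ee k j a) = k" by (simp add: ee_def zz_def)
lemma ee_idx: "a < s \<Longrightarrow> s \<ge> 1 \<Longrightarrow> ee k j a \<in> idx k s" by (auto simp: idx_iff ee_nth ee_len)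
lemma ee_zero: "ee k j 0 = zz k"
  by (rule nth_equalityI) (auto simp: ee_nth ee_len zz_nth, simp add: zz_def)

lemma ee_nadj: "j1 < k \<Longrightarrow> j2 < k \<Longrightarrow> j1 \<noteq> j2 \<Longrightarrow> \<not> adj k (ee k j1 1) (ee k j2 1)"
  unfolding adj_def by (metis ee_nth zero_neq_one)

definition Dm :: "nat \<Rightarrow> nat \<Rightarrow> (nat \<Rightarrow> nat \<Rightarrow> nat) \<Rightarrow> nat \<Rightarrow> nat list \<Rightarrow> nat list" where
  "Dm k s \<rho> m x = (if x \<in> idx k s then map (\<lambda>j. if j < m then \<rho> j (x ! j) else x ! j) [0..<k] else x)"

lemma Dm_idx:
  assumes "\<forall>j<k. \<rho> j permutes {..<s}" "x \<in> idx k s"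
  shows "Dm k s \<rho> m x \<in> idx k s" "\<And>j. j < k \<Longrightarrow> Dm k s \<rho> m x ! j = (if j < m then \<rho> j (x ! j) else x ! j)"
proof -
  have "\<rho> j (x ! j) < s" if "j < k" for j
    using assms that permutes_in_image[of "\<rho> j" "{..<s}" "x ! j"] by (simp add: idx_iff)
  then show "Dm k s \<rho> m x \<in> idx k s" "\<And>j. j < k \<Longrightarrow> Dm k s \<rho> m x ! j = (if j < m then \<rho> j (x ! j) else x ! j)"
    using assms(2) by (auto simp: Dm_def idx_iff)
qed

lemma Dm_G_iso:
  assumes "\<forall>j<k. \<rho> j permutes {..<s}" "m \<le> k"
  shows "Dm k s \<rho> m \<in> G_iso k s"
  using assms(2)
proof (induction m)
  case 0
  have "Dm k s \<rho> 0 = id"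
  proof
    fix x show "Dm k s \<rho> 0 x = id x"
      by (cases "x \<in> idx k s") (auto simp: Dm_def idx_iff map_nth)
  qed
  then show ?case using G_iso.iso_id by metis
next
  case (Suc m)
  then have m: "m < k" by simp
  have rp: "\<rho> m permutes {..<s}" using assms(1) m by simp
  have "Dm k s \<rho> (Suc m) = sym_perm k s m (\<rho> m) \<circ> Dm k s \<rho> m"
  proof
    fix x show "Dm k s \<rho> (Suc m) x = (sym_perm k s m (\<rho> m) \<circ> Dm k s \<rho> m) x"
    proof (cases "x \<in> idx k s")
      case False then show ?thesis by (simp add: Dm_def sym_perm_def)
    next
      case True
      have i1: "Dm k s \<rho> (Suc m) x \<in> idx k s" "Dm k s \<rho> m x \<in> idx k s" using Dm_idx[OF assms(1) True] by auto
      have i2: "sym_perm k s m (\<rho> m) (Dm k s \<rho> m x) \<in> idx k s" using sym_perm_idx(1)[OF m rp i1(2)] .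
      show ?thesis
      proof (rule nth_equalityI)
        show "length (Dm k s \<rho> (Suc m) x) = length ((sym_perm k s m (\<rho> m) \<circ> Dm k s \<rho> m) x)"
          using i1 i2 by (simp add: idx_iff)
        fix j assume "j < length (Dm k s \<rho> (Suc m) x)"
        then have j: "j < k" using i1 by (simp add: idx_iff)
        show "Dm k s \<rho> (Suc m) x ! j = (sym_perm k s m (\<rho> m) \<circ> Dm k s \<rho> m) x ! j"
          using sym_perm_idx(2)[OF m rp i1(2), of j] Dm_idx(2)[OF assms(1) True j] Dm_idx(2)[OF assms(1) True m] m
          by (auto simp: Dm_idx(2)[OF assms(1) True])
      qed
    qed
  qed
  moreover have "sym_perm k s m (\<rho> m) \<in> iso_gens k s" using m rp by (auto simp: iso_gens_def)
  moreover have "Dm k s \<rho> m \<in> G_iso k s" using Suc by simp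
  ultimately show ?case using G_iso.iso_step by metis
qed

lemma G_iso_reduce: "g \<in> G_iso k s \<Longrightarrow> g \<circ> \<pi> \<in> G_iso k s \<Longrightarrow> \<pi> \<in> G_iso k s"
proof -
  assume g: "g \<in> G_iso k s" and gp: "g \<circ> \<pi> \<in> G_iso k s"
  have "\<pi> = inv g \<circ> (g \<circ> \<pi>)" using permutes_inv_o(2)[OF G_iso_permutes[OF g]] by (simp add: o_assoc)
  then show ?thesis using G_iso_comp[OF G_iso_inv[OF g] gp] by simp
qed

definition Padj :: "nat \<Rightarrow> nat \<Rightarrow> (nat list \<Rightarrow> nat list) \<Rightarrow> bool" where
  "Padj k s \<pi> \<longleftrightarrow> \<pi> permutes idx k s \<and> (\<forall>p\<in>idx k s. \<forall>q\<in>idx k s. adj k (\<pi> p) (\<pi> q) = adj k p q)"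

lemma Padj_comp: "Padj k s g \<Longrightarrow> Padj k s \<pi> \<Longrightarrow> Padj k s (g \<circ> \<pi>)"
  unfolding Padj_def by (auto intro: permutes_compose simp: permutes_in_image)

lemma G_iso_Padj:
  assumes "s \<ge> 2" "k \<ge> 2" "g \<in> G_iso k s" shows "Padj k s g"
proof -
  have f: "g \<in> G_form k s 1 0 0" using G_iso_sub_form[OF assms(1,3)] .
  show ?thesis unfolding Padj_def
    using G_form_D(1)[OF f] G_form_adj[OF assms(1) _ _ f] assms(2) by auto
qed

lemma step_c:
  assumes k: "k \<ge> 2" and s: "s \<ge> 2" and P: "Padj k s \<pi>" and pz: "\<pi> (zz k) = zz k"
    and pe: "\<And>j. j < k \<Longrightarrow> \<pi> (ee k j 1) ! j \<noteq> 0"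
  shows "\<pi> \<in> G_iso k s"
proof -
  have pp: "\<pi> permutes idx k s" using P by (simp add: Padj_def)
  have Pa: "\<And>p q. p \<in> idx k s \<Longrightarrow> q \<in> idx k s \<Longrightarrow> adj k (\<pi> p) (\<pi> q) = adj k p q"
    using P by (simp add: Padj_def)
  have zi: "zz k \<in> idx k s" using s by (intro zz_idx) simp
  have ei: "\<And>j a. a < s \<Longrightarrow> ee k j a \<in> idx k s" using s by (intro ee_idx) auto
  have pi: "\<And>x. x \<in> idx k s \<Longrightarrow> \<pi> x \<in> idx k s" using pp by (simp add: permutes_in_image)
  have len: "\<And>x. x \<in> idx k s \<Longrightarrow> length x = k" by (simp add: idx_iff)
  have ent: "\<And>x m. x \<in> idx k s \<Longrightarrow> m < k \<Longrightarrow> x ! m < s" by (simp add: idx_iff)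
  have inj: "\<And>x y. \<pi> x = \<pi> y \<Longrightarrow> x = y" using permutes_inj[OF pp] by (auto dest: injD)
  have s1: "1 < s" using s by simp
  have line: "\<pi> (ee k j a) ! m = 0" if j: "j < k" and a: "a < s" and m: "m < k" "m \<noteq> j" for j a m
  proof -
    have "adj k (ee k j 1) (zz k)" using adj_upd1[OF j, of "zz k" 1] by (simp add: ee_def)
    then have "adj k (\<pi> (ee k j 1)) (zz k)" using Pa[OF ei[OF s1] zi] pz by simp
    then have w1: "adj k (zz k) (\<pi> (ee k j 1))" by (rule adj_sym)
    have w2: "\<And>m'. m' < k \<Longrightarrow> m' \<noteq> j \<Longrightarrow> \<pi> (ee k j 1) ! m' = 0"
      using adj_z_single[OF w1 zz_nth j pe[OF j]] by blast
    have "adj k (ee k j a) (zz k)" using adj_upd1[OF j, of "zz k" a] by (simp add: ee_def)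
    then have "adj k (\<pi> (ee k j a)) (zz k)" using Pa[OF ei[OF a] zi] pz by simp
    then have p1: "adj k (zz k) (\<pi> (ee k j a))" by (rule adj_sym)
    have "adj k (ee k j 1) (ee k j a)" using adj_upd[OF j, of "zz k" 1 a] by (simp add: ee_def)
    then have p2: "adj k (\<pi> (ee k j 1)) (\<pi> (ee k j a))" using Pa[OF ei[OF s1] ei[OF a]] by simp
    show ?thesis using adj_two[OF p1 p2 zz_nth j pe[OF j] w2 m] .
  qed
  define \<rho> where "\<rho> j a = (if j < k \<and> a < s then \<pi> (ee k j a) ! j else a)" for j a
  have lineq: "\<pi> (ee k j a) = ee k j (\<rho> j a)" if j: "j < k" and a: "a < s" for j a
  proof (rule nth_equalityI)
    show "length (\<pi> (ee k j a)) = length (ee k j (\<rho> j a))" using len[OF pi[OF ei[OF a]]] by (simp add: ee_len)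
    fix m assume "m < length (\<pi> (ee k j a))"
    then have m: "m < k" using len[OF pi[OF ei[OF a]]] by simp
    show "\<pi> (ee k j a) ! m = ee k j (\<rho> j a) ! m"
      using line[OF j a m] j a by (auto simp: ee_nth[OF m] \<rho>_def)
  qed
  have rp: "\<forall>j<k. \<rho> j permutes {..<s}"
  proof (intro allI impI)
    fix j assume j: "j < k"
    show "\<rho> j permutes {..<s}"
    proof (rule perm_of_inj)
      show "\<rho> j ` {..<s} \<subseteq> {..<s}" using ent[OF pi[OF ei] j] j by (auto simp: \<rho>_def)
      show "inj_on (\<rho> j) {..<s}"
      proof (rule inj_onI)
        fix a b assume a: "a \<in> {..<s}" and b: "b \<in> {..<s}" and e: "\<rho> j a = \<rho> j b"
        then have "\<pi> (ee k j a) = \<pi> (ee k j b)" using lineq[OF j] by simp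
        then have "ee k j a ! j = ee k j b ! j" using inj by metis
        then show "a = b" using j by (simp add: ee_nth)
      qed
    qed (auto simp: \<rho>_def)
  qed
  have r0: "\<rho> j 0 = 0" if "j < k" for j
    using that s by (simp add: \<rho>_def ee_zero pz zz_nth)
  have rnz: "\<rho> j a \<noteq> 0" if "j < k" "a < s" "a \<noteq> 0" for j a
  proof
    assume "\<rho> j a = 0"
    then have "\<rho> j a = \<rho> j 0" using r0 that by simp
    then show False using permutes_inj[of "\<rho> j" "{..<s}"] rp that by (auto dest: injD)
  qed
  define D where "D = Dm k s \<rho> k"
  have Dn: "\<And>x j. x \<in> idx k s \<Longrightarrow> j < k \<Longrightarrow> D x ! j = \<rho> j (x ! j)"
    using Dm_idx(2)[OF rp] by (simp add: D_def)
  have Di: "\<And>x. x \<in> idx k s \<Longrightarrow> D x \<in> idx k s"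
    using Dm_idx(1)[OF rp] by (simp add: D_def)
  have upd_idx: "x[j := 0] \<in> idx k s" if "x \<in> idx k s" for x j
    using that s by (cases "j < length x") (auto simp: idx_iff nth_list_update list_update_beyond)
  have main: "\<forall>x. x \<in> idx k s \<longrightarrow> card {j. j < k \<and> x ! j \<noteq> 0} = n \<longrightarrow> \<pi> x = D x" for n
  proof (induction n rule: less_induct)
    case (less n)
    show ?case
    proof (intro allI impI)
      fix x assume x: "x \<in> idx k s" and cx: "card {j. j < k \<and> x ! j \<noteq> 0} = n"
      define S where "S = {j. j < k \<and> x ! j \<noteq> 0}"
      have fS: "finite S" by (simp add: S_def)
      show "\<pi> x = D x"
      proof (cases "\<exists>j1 j2. j1 \<in> S \<and> j2 \<in> S \<and> j1 \<noteq> j2")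
        case False
        obtain j where j: "j < k" "\<And>m. m < k \<Longrightarrow> m \<noteq> j \<Longrightarrow> x ! m = 0"
        proof (cases "S = {}")
          case True
          then show ?thesis using that[of 0] k by (auto simp: S_def)
        next
          case nS: False
          then obtain j where jS: "j \<in> S" by blast
          have "x ! m = 0" if "m < k" "m \<noteq> j" for m using False jS that unfolding S_def by blast
          then show ?thesis using that[of j] jS by (auto simp: S_def)
        qed
        have xe: "x = ee k j (x ! j)"
          by (rule nth_equalityI) (use x j in \<open>auto simp: len ee_len ee_nth\<close>)
        have "\<pi> x = ee k j (\<rho> j (x ! j))" using lineq[OF j(1) ent[OF x j(1)]] xe by metis
        also have "\<dots> = D x"
          by (rule nth_equalityI) (use x j Di r0 in \<open>auto simp: len ee_len ee_nth Dn\<close>)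
        finally show ?thesis .
      next
        case True
        then obtain j1 j2 where jj: "j1 \<in> S" "j2 \<in> S" "j1 \<noteq> j2" by blast
        have j1: "j1 < k" "x ! j1 \<noteq> 0" and j2: "j2 < k" "x ! j2 \<noteq> 0" using jj by (auto simp: S_def)
        have lx: "length x = k" using len[OF x] .
        define y where "y = x[j1 := 0]"
        define z where "z = x[j2 := 0]"
        define w where "w = x[j1 := 0, j2 := 0]"
        have yi: "y \<in> idx k s" and zi': "z \<in> idx k s" and wi: "w \<in> idx k s"
          using upd_idx x by (auto simp: y_def z_def w_def)
        have yn: "y ! m = (if m = j1 then 0 else x ! m)" for m using j1 lx by (simp add: y_def nth_list_update)
        have zn: "z ! m = (if m = j2 then 0 else x ! m)" for m using j2 lx by (simp add: z_def nth_list_update)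
        have wn: "w ! m = (if m = j2 then 0 else if m = j1 then 0 else x ! m)" for m
          using j1 j2 lx by (simp add: w_def nth_list_update)
        have Sy: "{j. j < k \<and> y ! j \<noteq> 0} = S - {j1}" by (auto simp: S_def yn)
        have Sz: "{j. j < k \<and> z ! j \<noteq> 0} = S - {j2}" by (auto simp: S_def zn)
        have Sw: "{j. j < k \<and> w ! j \<noteq> 0} \<subseteq> S - {j1}" by (auto simp: S_def wn)
        have cy: "card (S - {j1}) < n" using card_Diff1_less[OF fS jj(1)] cx S_def by simp
        have cz: "card (S - {j2}) < n" using card_Diff1_less[OF fS jj(2)] cx S_def by simp
        have cw: "card {j. j < k \<and> w ! j \<noteq> 0} < n"
          using card_mono[OF _ Sw] cy fS by (meson finite_Diff le_less_trans)
        have hy: "\<pi> y = D y" using less.IH[OF cy[folded Sy]] yi by blast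
        have hz: "\<pi> z = D z" using less.IH[OF cz[folded Sz]] zi' by blast
        have hw: "\<pi> w = D w" using less.IH[OF cw] wi by blast
        have "adj k y x" unfolding y_def using adj_upd1[OF j1(1)] .
        then have a1: "adj k (\<pi> x) (D y)" using Pa[OF x yi] hy adj_sym by metis
        have "adj k z x" unfolding z_def using adj_upd1[OF j2(1)] .
        then have a2: "adj k (\<pi> x) (D z)" using Pa[OF x zi'] hz adj_sym by metis
        have u1: "D y ! j1 \<noteq> D z ! j1"
          using Dn[OF yi j1(1)] Dn[OF zi' j1(1)] yn zn jj(3) r0[OF j1(1)] rnz[OF j1(1) ent[OF x j1(1)] j1(2)] by simp
        have u2: "D y ! j2 \<noteq> D z ! j2"
          using Dn[OF yi j2(1)] Dn[OF zi' j2(1)] yn zn jj(3) r0[OF j2(1)] rnz[OF j2(1) ent[OF x j2(1)] j2(2)] by simp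
        have u3: "D y ! m = D z ! m" if "m < k" "m \<noteq> j1" "m \<noteq> j2" for m
          using Dn[OF yi that(1)] Dn[OF zi' that(1)] yn zn that by simp
        have lpx: "length (\<pi> x) = k" using len[OF pi[OF x]] .
        from adj_comb[OF a1 a2 j1(1) j2(1) jj(3) u1 u2 u3]
        show ?thesis
        proof
          assume c: "\<forall>m<k. \<pi> x ! m = (if m = j1 then D z ! j1 else D y ! m)"
          show ?thesis
          proof (rule nth_equalityI)
            show "length (\<pi> x) = length (D x)" using lpx len[OF Di[OF x]] by simp
            fix m assume "m < length (\<pi> x)"
            then have m: "m < k" using lpx by simp
            show "\<pi> x ! m = D x ! m"
              using c m Dn[OF x m] Dn[OF yi m] Dn[OF zi' j1(1)] yn zn jj(3) by auto
          qed
        next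
          assume c: "\<forall>m<k. \<pi> x ! m = (if m = j2 then D z ! j2 else D y ! m)"
          have "\<pi> x = D w"
          proof (rule nth_equalityI)
            show "length (\<pi> x) = length (D w)" using lpx len[OF Di[OF wi]] by simp
            fix m assume "m < length (\<pi> x)"
            then have m: "m < k" using lpx by simp
            show "\<pi> x ! m = D w ! m"
              using c m Dn[OF wi m] Dn[OF yi m] Dn[OF zi' j2(1)] yn zn wn jj(3) r0[OF j2(1)] by auto
          qed
          then have "x = w" using hw inj by metis
          then show ?thesis using wn[of j1] j1 jj(3) by simp
        qed
      qed
    qed
  qed
  have "\<pi> = D"
  proof
    fix x show "\<pi> x = D x"
    proof (cases "x \<in> idx k s")
      case True then show ?thesis using main by blast
    next
      case False then show ?thesis using permutes_not_in[OF pp False] by (simp add: D_def Dm_def)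
    qed
  qed
  then show ?thesis using Dm_G_iso[OF rp] D_def by simp
qed

lemma step_b:
  assumes k: "k \<ge> 2" and s: "s \<ge> 2" and P: "Padj k s \<pi>" and pz: "\<pi> (zz k) = zz k"
  shows "\<pi> \<in> G_iso k s"
proof -
  have pp: "\<pi> permutes idx k s" using P by (simp add: Padj_def)
  have Pa: "\<And>p q. p \<in> idx k s \<Longrightarrow> q \<in> idx k s \<Longrightarrow> adj k (\<pi> p) (\<pi> q) = adj k p q"
    using P by (simp add: Padj_def)
  have zi: "zz k \<in> idx k s" using s by (intro zz_idx) simp
  have ei: "\<And>j a. a < s \<Longrightarrow> ee k j a \<in> idx k s" using s by (intro ee_idx) auto
  have pi: "\<And>x. x \<in> idx k s \<Longrightarrow> \<pi> x \<in> idx k s" using pp by (simp add: permutes_in_image)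
  have len: "\<And>x. x \<in> idx k s \<Longrightarrow> length x = k" by (simp add: idx_iff)
  have inj: "\<And>x y. \<pi> x = \<pi> y \<Longrightarrow> x = y" using permutes_inj[OF pp] by (auto dest: injD)
  have s1: "1 < s" using s by simp
  have nz: "\<exists>m<k. \<pi> (ee k j 1) ! m \<noteq> 0" if j: "j < k" for j
  proof (rule ccontr)
    assume a: "\<not> (\<exists>m<k. \<pi> (ee k j 1) ! m \<noteq> 0)"
    have l: "length (\<pi> (ee k j 1)) = k" using len pi ei s1 by blast
    have "\<pi> (ee k j 1) = zz k"
    proof (rule nth_equalityI)
      show "length (\<pi> (ee k j 1)) = length (zz k)" using l by (simp add: zz_def)
      fix i assume "i < length (\<pi> (ee k j 1))"
      then show "\<pi> (ee k j 1) ! i = zz k ! i" using a l by (simp add: zz_nth)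
    qed
    then have "ee k j 1 = zz k" using pz inj by metis
    then have "ee k j 1 ! j = zz k ! j" by simp
    then show False using j by (simp add: ee_nth zz_nth)
  qed
  define f where "f j = (if j < k then (SOME m. m < k \<and> \<pi> (ee k j 1) ! m \<noteq> 0) else j)" for j
  have fj: "f j < k \<and> \<pi> (ee k j 1) ! f j \<noteq> 0" if "j < k" for j
    unfolding f_def using that someI_ex[OF nz[OF that]] by simp
  have w1: "adj k (zz k) (\<pi> (ee k j 1))" if j: "j < k" for j
  proof -
    have "adj k (ee k j 1) (zz k)" using adj_upd1[OF j, of "zz k" 1] by (simp add: ee_def)
    then have "adj k (\<pi> (ee k j 1)) (zz k)" using Pa[OF ei[OF s1] zi] pz by simp
    then show ?thesis by (rule adj_sym)
  qed
  have fz: "\<pi> (ee k j 1) ! m = 0" if "j < k" "m < k" "m \<noteq> f j" for j m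
    using adj_z_single[OF w1[OF that(1)] zz_nth _ _ that(2,3)] fj[OF that(1)] by blast
  have fperm: "f permutes {..<k}"
  proof (rule perm_of_inj)
    show "f ` {..<k} \<subseteq> {..<k}" using fj by auto
    show "inj_on f {..<k}"
    proof (rule inj_onI)
      fix j1 j2 assume j1: "j1 \<in> {..<k}" and j2: "j2 \<in> {..<k}" and e: "f j1 = f j2"
      have "adj k (\<pi> (ee k j1 1)) (\<pi> (ee k j2 1))"
        unfolding adj_def using fj[of j1] fz[of j1] fz[of j2] j1 j2 e by auto
      then have "adj k (ee k j1 1) (ee k j2 1)" using Pa[OF ei[OF s1] ei[OF s1]] by simp
      then show "j1 = j2" using ee_nadj j1 j2 by blast
    qed
  qed (auto simp: f_def)
  define g where "g = coord_perm k s f"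
  have g: "g \<in> G_iso k s" unfolding g_def using fperm by (intro G_iso_gen) (auto simp: iso_gens_def)
  have P2: "Padj k s (g \<circ> \<pi>)" using Padj_comp[OF G_iso_Padj[OF s k g] P] .
  have z2: "(g \<circ> \<pi>) (zz k) = zz k"
  proof -
    have gi: "g (zz k) \<in> idx k s" using coord_perm_idx(1)[OF fperm zi] by (simp add: g_def)
    have "g (zz k) = zz k"
    proof (rule nth_equalityI)
      show "length (g (zz k)) = length (zz k)" using gi by (simp add: idx_iff zz_def)
      fix i assume "i < length (g (zz k))"
      then have i: "i < k" using gi by (simp add: idx_iff)
      then have "f i < k" using fj by blast
      then show "g (zz k) ! i = zz k ! i"
        using coord_perm_idx(2)[OF fperm zi i] i by (simp add: g_def zz_nth)
    qed
    then show ?thesis using pz by simp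
  qed
  have e2: "(g \<circ> \<pi>) (ee k j 1) ! j \<noteq> 0" if "j < k" for j
    using coord_perm_idx(2)[OF fperm pi[OF ei[OF s1]] that] fj[OF that] by (simp add: g_def)
  have "g \<circ> \<pi> \<in> G_iso k s" using step_c[OF k s P2 z2 e2] .
  then show ?thesis using G_iso_reduce[OF g] by blast
qed

lemma Padj_iso:
  assumes k: "k \<ge> 2" and s: "s \<ge> 2" and P: "Padj k s \<pi>"
  shows "\<pi> \<in> G_iso k s"
proof -
  have pp: "\<pi> permutes idx k s" using P by (simp add: Padj_def)
  have zi: "zz k \<in> idx k s" using s by (intro zz_idx) simp
  define v where "v = \<pi> (zz k)"
  have vi: "v \<in> idx k s" using pp zi by (simp add: v_def permutes_in_image)
  define \<rho> where "\<rho> j = Transposition.transpose 0 (v ! j)" for j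
  have rp: "\<forall>j<k. \<rho> j permutes {..<s}"
    using vi s by (auto simp: \<rho>_def idx_iff intro!: permutes_swap_id)
  define h where "h = Dm k s \<rho> k"
  have h: "h \<in> G_iso k s" unfolding h_def using Dm_G_iso[OF rp] by simp
  have hz: "h (zz k) = v"
  proof (rule nth_equalityI)
    show "length (h (zz k)) = length v" using Dm_idx(1)[OF rp zi] vi by (simp add: h_def idx_iff)
    fix i assume "i < length (h (zz k))"
    then have i: "i < k" using Dm_idx(1)[OF rp zi] by (simp add: h_def idx_iff)
    have "\<rho> i 0 = v ! i" by (simp add: \<rho>_def)
    then show "h (zz k) ! i = v ! i" using Dm_idx(2)[OF rp zi i, of k] i by (simp add: h_def zz_nth)
  qed
  have hi: "inv h \<in> G_iso k s" using G_iso_inv[OF h] .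
  have P1: "Padj k s (inv h \<circ> \<pi>)" using Padj_comp[OF G_iso_Padj[OF s k hi] P] .
  have z1: "(inv h \<circ> \<pi>) (zz k) = zz k"
    using hz permutes_inv_eq[OF G_iso_permutes[OF h]] by (simp add: v_def)
  have "inv h \<circ> \<pi> \<in> G_iso k s" using step_b[OF k s P1 z1] .
  then show ?thesis using G_iso_reduce[OF hi] by blast
qed

lemma G_form_eq_iso:
  assumes s: "s \<ge> 2" and t: "1 \<le> t" "t \<le> k - 1"
  shows "G_form k s t lam pmax = G_iso k s"
proof
  have k: "k \<ge> 2" using t by simp
  show "G_form k s t lam pmax \<subseteq> G_iso k s"
  proof
    fix \<pi> assume f: "\<pi> \<in> G_form k s t lam pmax"
    have "Padj k s \<pi>" unfolding Padj_def using G_form_D(1)[OF f] G_form_adj[OF s t f] by blast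
    then show "\<pi> \<in> G_iso k s" using Padj_iso[OF k s] by blast
  qed
  show "G_iso k s \<subseteq> G_form k s t lam pmax" using G_iso_sub_form[OF s] by blast
qed

lemma G_form_LP:
  assumes f: "\<pi> \<in> G_form k s t lam pmax"
  shows "\<pi> \<in> G_LP k s t lam pmax"
proof -
  have pp: "\<pi> permutes idx k s" using G_form_D(1)[OF f] .
  obtain \<sigma> where sg: "\<sigma> permutes oa_rowsA k s t"
    "\<forall>r\<in>oa_rowsA k s t. \<forall>i\<in>idx k s. blk (\<sigma> r) (\<pi> i) \<longleftrightarrow> blk r i"
    using G_form_D(2)[OF f] by blast
  have ip: "inv \<pi> permutes idx k s" using permutes_inv[OF pp] .
  have injip: "inj_on (inv \<pi>) A" for A using permutes_inj_on[OF ip] .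
  have blkset: "{i \<in> idx k s. \<forall>j\<in>J. i ! j = a j} = {i \<in> idx k s. blk (J, a) i}" for J a
    by (simp add: blk_def)
  have img: "inv \<pi> ` {i \<in> idx k s. blk r i} = {u \<in> idx k s. blk (inv \<sigma> r) u}"
    if r: "r \<in> oa_rowsA k s t" for r
  proof -
    have r': "inv \<sigma> r \<in> oa_rowsA k s t" using r permutes_inv[OF sg(1)] by (simp add: permutes_in_image)
    have sr: "\<sigma> (inv \<sigma> r) = r" using permutes_inverses(1)[OF sg(1)] .
    show ?thesis
    proof (intro equalityI subsetI)
      fix u assume "u \<in> inv \<pi> ` {i \<in> idx k s. blk r i}"
      then obtain i where i: "i \<in> idx k s" "blk r i" "u = inv \<pi> i" by blast
      have ui: "u \<in> idx k s" using i ip by (simp add: permutes_in_image)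
      have "\<pi> u = i" using i(3) permutes_inverses(1)[OF pp] by simp
      moreover have "blk (\<sigma> (inv \<sigma> r)) (\<pi> u) \<longleftrightarrow> blk (inv \<sigma> r) u" using sg(2) r' ui by blast
      ultimately have "blk (inv \<sigma> r) u" using i(2) sr by simp
      then show "u \<in> {u \<in> idx k s. blk (inv \<sigma> r) u}" using ui by simp
    next
      fix u assume u: "u \<in> {u \<in> idx k s. blk (inv \<sigma> r) u}"
      moreover have "blk (\<sigma> (inv \<sigma> r)) (\<pi> u) \<longleftrightarrow> blk (inv \<sigma> r) u" using sg(2) r' u by blast
      ultimately have "blk r (\<pi> u)" using sr by simp
      moreover have "\<pi> u \<in> idx k s" using u pp by (simp add: permutes_in_image)
      moreover have "u = inv \<pi> (\<pi> u)" using permutes_inverses(2)[OF pp] by simp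
      ultimately show "u \<in> inv \<pi> ` {i \<in> idx k s. blk r i}" by blast
    qed
  qed
  show ?thesis unfolding G_LP_def
  proof (intro CollectI conjI ballI pp)
    fix x assume x: "x \<in> oa_LP_feasible k s t lam pmax"
    have x0: "\<And>i. i \<notin> idx k s \<Longrightarrow> x i = 0" and
      xs: "\<And>J a. J \<subseteq> {..<k} \<Longrightarrow> card J = t \<Longrightarrow> a \<in> (J \<rightarrow>\<^sub>E {..<s}) \<Longrightarrow>
              (\<Sum>i\<in>{i\<in>idx k s. \<forall>j\<in>J. i ! j = a j}. x i) = real lam" and
      xb: "\<And>i. i \<in> idx k s \<Longrightarrow> 0 \<le> x i \<and> x i \<le> real pmax"
      using x unfolding oa_LP_feasible_def by blast+
    have xs': "(\<Sum>i\<in>{i\<in>idx k s. blk r i}. x i) = real lam" if "r \<in> oa_rowsA k s t" for r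
      using xs[of "fst r" "snd r"] that by (cases r) (auto simp: oa_rowsA_def blkset)
    show "perm_vars \<pi> x \<in> oa_LP_feasible k s t lam pmax"
      unfolding oa_LP_feasible_def
    proof (intro CollectI conjI allI impI ballI)
      fix i assume "i \<notin> idx k s"
      then show "perm_vars \<pi> x i = 0" using x0 permutes_not_in[OF ip] by (simp add: perm_vars_def)
    next
      fix J a assume Ja: "J \<subseteq> {..<k} \<and> card J = t \<and> a \<in> J \<rightarrow>\<^sub>E {..<s}"
      then have r: "(J, a) \<in> oa_rowsA k s t" by (simp add: oa_rowsA_def)
      have "(\<Sum>i\<in>{i \<in> idx k s. \<forall>j\<in>J. i ! j = a j}. perm_vars \<pi> x i)
          = (\<Sum>i\<in>{i \<in> idx k s. blk (J, a) i}. x (inv \<pi> i))" by (simp add: blkset perm_vars_def)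
      also have "\<dots> = (\<Sum>u\<in>inv \<pi> ` {i \<in> idx k s. blk (J, a) i}. x u)"
        by (rule sum.reindex[OF injip, symmetric, unfolded comp_def])
      also have "\<dots> = real lam" using img[OF r] xs'[OF permutes_in_image[OF permutes_inv[OF sg(1)], THEN iffD2, OF r]]
        by simp
      finally show "(\<Sum>i\<in>{i \<in> idx k s. \<forall>j\<in>J. i ! j = a j}. perm_vars \<pi> x i) = real lam" .
    next
      fix i assume "i \<in> idx k s"
      then have "inv \<pi> i \<in> idx k s" using ip by (simp add: permutes_in_image)
      then show "0 \<le> perm_vars \<pi> x i" "perm_vars \<pi> x i \<le> real pmax" using xb by (simp_all add: perm_vars_def)
    qed
    have "(\<Sum>i\<in>idx k s. perm_vars \<pi> x i) = (\<Sum>i\<in>idx k s. x (inv \<pi> i))" by (simp add: perm_vars_def)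
    also have "\<dots> = (\<Sum>u\<in>inv \<pi> ` idx k s. x u)"
      by (rule sum.reindex[OF injip, symmetric, unfolded comp_def])
    also have "\<dots> = (\<Sum>u\<in>idx k s. x u)" using permutes_image[OF ip] by simp
    finally show "(\<Sum>i\<in>idx k s. perm_vars \<pi> x i) = (\<Sum>i\<in>idx k s. x i)" .
  qed
qed

lemma card_G_iso:
  assumes s: "s \<ge> 2"
  shows "fact k * fact s ^ k \<le> card (G_iso k s)"
proof -
  define Dom where "Dom = {\<sigma>. \<sigma> permutes {..<k}} \<times> ({..<k} \<rightarrow>\<^sub>E {p. p permutes {..<s}})"
  define \<Phi> where "\<Phi> = (\<lambda>(\<sigma>, \<rho>). coord_perm k s \<sigma> \<circ> Dm k s \<rho> k)"
  have zi: "zz k \<in> idx k s" using s by (intro zz_idx) simp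
  have ei: "\<And>j a. a < s \<Longrightarrow> ee k j a \<in> idx k s" using s by (intro ee_idx) auto
  have rpD: "\<forall>j<k. \<rho> j permutes {..<s}" if "\<rho> \<in> {..<k} \<rightarrow>\<^sub>E {p. p permutes {..<s}}" for \<rho>
    using that by auto
  have Mn: "\<Phi> (\<sigma>, \<rho>) x ! j = \<rho> (\<sigma> j) (x ! \<sigma> j)"
    if "(\<sigma>, \<rho>) \<in> Dom" "x \<in> idx k s" "j < k" for \<sigma> \<rho> x j
  proof -
    have sp: "\<sigma> permutes {..<k}" and rp: "\<forall>j<k. \<rho> j permutes {..<s}" using that(1) rpD by (auto simp: Dom_def)
    have sj: "\<sigma> j < k" using permutes_in_image[OF sp, of j] that(3) by simp
    show ?thesis
      using coord_perm_idx(2)[OF sp Dm_idx(1)[OF rp that(2)] that(3)] Dm_idx(2)[OF rp that(2) sj, of k] sj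
      by (simp add: \<Phi>_def)
  qed
  have sub: "\<Phi> ` Dom \<subseteq> G_iso k s"
  proof clarify
    fix \<sigma> \<rho> assume d: "(\<sigma>, \<rho>) \<in> Dom"
    then have sp: "\<sigma> permutes {..<k}" and rp: "\<forall>j<k. \<rho> j permutes {..<s}" using rpD by (auto simp: Dom_def)
    have "coord_perm k s \<sigma> \<in> G_iso k s" using sp by (intro G_iso_gen) (auto simp: iso_gens_def)
    then show "\<Phi> (\<sigma>, \<rho>) \<in> G_iso k s" using G_iso_comp Dm_G_iso[OF rp order.refl] by (simp add: \<Phi>_def)
  qed
  have inj: "inj_on \<Phi> Dom"
  proof (rule inj_onI, clarify)
    fix \<sigma>1 \<rho>1 \<sigma>2 \<rho>2 assume d1: "(\<sigma>1, \<rho>1) \<in> Dom" and d2: "(\<sigma>2, \<rho>2) \<in> Dom"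
      and e: "\<Phi> (\<sigma>1, \<rho>1) = \<Phi> (\<sigma>2, \<rho>2)"
    have sp1: "\<sigma>1 permutes {..<k}" and rp1: "\<forall>j<k. \<rho>1 j permutes {..<s}" using d1 rpD by (auto simp: Dom_def)
    have sp2: "\<sigma>2 permutes {..<k}" and rp2: "\<forall>j<k. \<rho>2 j permutes {..<s}" using d2 rpD by (auto simp: Dom_def)
    have ex: "\<rho>1 \<in> extensional {..<k}" "\<rho>2 \<in> extensional {..<k}" using d1 d2 by (auto simp: Dom_def PiE_def)
    have eq: "\<rho>1 (\<sigma>1 j) (x ! \<sigma>1 j) = \<rho>2 (\<sigma>2 j) (x ! \<sigma>2 j)" if "x \<in> idx k s" "j < k" for x j
      using Mn[OF d1 that] Mn[OF d2 that] e by simp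
    have s12: "\<sigma>1 j = \<sigma>2 j" for j
    proof (cases "j < k")
      case False
      then show ?thesis using permutes_not_in[OF sp1] permutes_not_in[OF sp2] by simp
    next
      case True
      define m where "m = \<sigma>1 j"
      have m: "m < k" using permutes_in_image[OF sp1, of j] True by (simp add: m_def)
      have m2: "\<sigma>2 j < k" using permutes_in_image[OF sp2, of j] True by simp
      show ?thesis
      proof (rule ccontr)
        assume ne: "\<sigma>1 j \<noteq> \<sigma>2 j"
        have "\<rho>1 m 0 = \<rho>2 (\<sigma>2 j) 0" using eq[OF zi True] m m2 by (simp add: m_def zz_nth)
        moreover have "\<rho>1 m 1 = \<rho>2 (\<sigma>2 j) 0"
          using eq[OF ei True, of 1 m] m m2 ne s by (simp add: m_def ee_nth)
        ultimately have "\<rho>1 m 1 = \<rho>1 m 0" by simp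
        then show False using permutes_inj[of "\<rho>1 m" "{..<s}"] rp1 m by (auto dest: injD)
      qed
    qed
    then have "\<sigma>1 = \<sigma>2" by blast
    moreover have "\<rho>1 = \<rho>2"
    proof
      fix m show "\<rho>1 m = \<rho>2 m"
      proof (cases "m < k")
        case False then show ?thesis using ex by (simp add: extensional_def)
      next
        case True
        show ?thesis
        proof
          fix a show "\<rho>1 m a = \<rho>2 m a"
          proof (cases "a < s")
            case False
            then show ?thesis using permutes_not_in[of "\<rho>1 m" "{..<s}"] permutes_not_in[of "\<rho>2 m" "{..<s}"] rp1 rp2 True
              by simp
          next
            case a: True
            define j where "j = inv \<sigma>1 m"
            have sj: "\<sigma>1 j = m" using permutes_inverses(1)[OF sp1] by (simp add: j_def)
            have j: "j < k" using permutes_in_image[OF permutes_inv[OF sp1], of m] True by (simp add: j_def)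
            show ?thesis using eq[OF ei[OF a] j, of m] sj s12[of j] True by (simp add: ee_nth)
          qed
        qed
      qed
    qed
    ultimately show "\<sigma>1 = \<sigma>2 \<and> \<rho>1 = \<rho>2" by simp
  qed
  have cD: "card Dom = fact k * fact s ^ k"
  proof -
    have "card {\<sigma>. \<sigma> permutes {..<k}} = fact k" using card_permutations[of "{..<k}" k] by simp
    moreover have "card ({..<k} \<rightarrow>\<^sub>E {p. p permutes {..<s}}) = fact s ^ k"
      using card_PiE[of "{..<k}" "\<lambda>_. {p. p permutes {..<s}}"] card_permutations[of "{..<s}" s] by simp
    ultimately show ?thesis by (simp add: Dom_def card_cartesian_product)
  qed
  have fin: "finite (G_iso k s)"
  proof (rule finite_subset)
    show "G_iso k s \<subseteq> {p. p permutes idx k s}" using G_iso_permutes by blast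
    show "finite {p. p permutes idx k s}" using finite_permutations[OF finite_idx] .
  qed
  have "card Dom = card (\<Phi> ` Dom)" using card_image[OF inj] by simp
  also have "\<dots> \<le> card (G_iso k s)" using card_mono[OF fin sub] .
  finally show ?thesis using cD by simp
qed

theorem lemma8:
  fixes k s t N lam pmax :: nat
  assumes "s \<ge> 2" and "1 \<le> t" and "t \<le> k - 1"
    and "N > 0" and "s ^ t dvd N" and "lam = N div s ^ t"
    and "pmax > 0" and "pmax \<le> lam"
  shows "G_form k s t lam pmax = G_iso k s
       \<and> G_form k s t lam pmax \<subseteq> G_LP k s t lam pmax
       \<and> card (G_LP k s t lam pmax) \<ge> fact k * fact s ^ k"
proof -
  have eq: "G_form k s t lam pmax = G_iso k s" using G_form_eq_iso[OF assms(1-3)] .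
  have sub: "G_form k s t lam pmax \<subseteq> G_LP k s t lam pmax" using G_form_LP by blast
  have fin: "finite (G_LP k s t lam pmax)"
  proof (rule finite_subset)
    show "G_LP k s t lam pmax \<subseteq> {p. p permutes idx k s}" by (auto simp: G_LP_def)
    show "finite {p. p permutes idx k s}" using finite_permutations[OF finite_idx] .
  qed
  have "fact k * fact s ^ k \<le> card (G_iso k s)" using card_G_iso[OF assms(1)] .
  also have "\<dots> \<le> card (G_LP k s t lam pmax)" using card_mono[OF fin sub] eq by simp
  finally show ?thesis using eq sub by simp
qed

end
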